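(* Let $c,d\in\mathbb{R}^n$ be distinct nonzero vectors with $c^Td\le0$. Then $\gamma[c,d]\le\tfrac12$. If in addition $0\notin[c,d]$, then $\gamma[c,d]>0$.
   Context: For distinct vectors $c,d\in\mathbb{R}^n$, $\gamma[c,d]=\frac{\sqrt{\|c\|^2\|d\|^2-(c^Td)^2}}{\|c-d\|^2}$, and $[c,d]$ denotes the closed line segment between $c$ and $d$. *)

theory Defs
  imports "HOL-Analysis.Analysis"
begin

definition gamma :: "real ^ 'n \<Rightarrow> real ^ 'n \<Rightarrow> real" where
  "gamma c d = sqrt ((norm c)^2 * (norm d)^2 - (c \<bullet> d)^2) / (norm (c - d))^2"

end

theory Submission
  imports Defs
begin

theorem mainTheorem8:
  fixes c d :: "real ^ 'n"
  assumes "c \<noteq> d" and "c \<noteq> 0" and "d \<noteq> 0" and "c \<bullet> d \<le> 0"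
  shows "gamma c d \<le> 1/2 \<and> (0 \<notin> closed_segment c d \<longrightarrow> gamma c d > 0)"
proof -
  define a where "a = norm c"
  define b where "b = norm d"
  define p where "p = c \<bullet> d"
  have a0: "a > 0" using assms a_def by simp
  have b0: "b > 0" using assms b_def by simp
  have p0: "p \<le> 0" using assms p_def by simp
  have cs: "\<bar>p\<bar> \<le> a * b" unfolding p_def a_def b_def by (rule Cauchy_Schwarz_ineq2)
  have nd: "(norm (c - d))^2 = a^2 + b^2 - 2*p"
    unfolding a_def b_def p_def by (simp add: power2_norm_eq_inner inner_diff algebra_simps inner_commute)
  have D: "(norm (c - d))^2 > 0" using assms(1) by simp
  have g: "gamma c d = sqrt (a^2*b^2 - p^2) / (a^2 + b^2 - 2*p)"
    unfolding gamma_def a_def b_def p_def nd[unfolded a_def b_def p_def] ..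
  have pos: "a^2 + b^2 - 2*p > 0" using D nd by simp
  have part1: "gamma c d \<le> 1/2"
  proof -
    have "sqrt (a^2*b^2 - p^2) \<le> (a^2 + b^2 - 2*p)/2"
    proof (rule real_le_lsqrt)
      show "0 \<le> (a^2 + b^2 - 2*p)/2" using pos by simp
      have "a^2*b^2 \<le> ((a^2+b^2)/2)^2" 
      proof -
        have "0 \<le> (a^2 - b^2)^2" by simp
        then show ?thesis by (simp add: power2_eq_square algebra_simps divide_simps)
      qed
      also have "\<dots> \<le> ((a^2 + b^2 - 2*p)/2)^2"
        by (rule power_mono) (use p0 in auto)
      finally show "a^2*b^2 - p^2 \<le> ((a^2 + b^2 - 2*p)/2)^2"
        by (smt (verit) zero_le_power2)
    qed
    then show ?thesis unfolding g using pos by (simp add: divide_simps)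
  qed
  have part2: "gamma c d > 0" if n0: "0 \<notin> closed_segment c d"
  proof (rule ccontr)
    assume "\<not> gamma c d > 0"
    then have "sqrt (a^2*b^2 - p^2) \<le> 0" using g pos by (simp add: divide_simps)
    then have "a^2*b^2 - p^2 \<le> 0" by simp
    moreover have "p^2 \<le> (a*b)^2" using cs by (metis abs_le_square_iff abs_mult a0 b0 abs_of_pos mult_pos_pos)
    ultimately have "p^2 = (a*b)^2" by (simp add: power_mult_distrib)
    then have pe: "p = - (a*b)" using p0 a0 b0
      by (smt (verit) mult_pos_pos power2_eq_iff)
    define u where "u = a / (a + b)"
    have u01: "0 \<le> u" "u \<le> 1" using a0 b0 unfolding u_def by auto
    have "(1 - u) *\<^sub>R c + u *\<^sub>R d = (1/(a+b)) *\<^sub>R (b *\<^sub>R c + a *\<^sub>R d)"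
      using a0 b0 unfolding u_def by (simp add: field_simps scaleR_add_right)
    moreover have "b *\<^sub>R c + a *\<^sub>R d = 0"
    proof -
      have "(norm (b *\<^sub>R c + a *\<^sub>R d))^2 = b^2*a^2 + a^2*b^2 + 2*a*b*p"
      proof -
        have cc: "c \<bullet> c = a^2" unfolding a_def by (rule power2_norm_eq_inner[symmetric])
        have dd: "d \<bullet> d = b^2" unfolding b_def by (rule power2_norm_eq_inner[symmetric])
        have dc: "d \<bullet> c = p" unfolding p_def by (rule inner_commute)
        have "(norm (b *\<^sub>R c + a *\<^sub>R d))^2 = (b *\<^sub>R c + a *\<^sub>R d) \<bullet> (b *\<^sub>R c + a *\<^sub>R d)"
          by (rule power2_norm_eq_inner)
        also have "\<dots> = b*b * (c \<bullet> c) + a*a * (d \<bullet> d) + b*a*(c \<bullet> d) + a*b*(d \<bullet> c)"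
          by (simp only: inner_add_left inner_add_right inner_scaleR_left inner_scaleR_right) (simp add: algebra_simps)
        finally show ?thesis using cc dd dc p_def by (simp add: power2_eq_square algebra_simps)
      qed
      also have "\<dots> = 0" using pe by (simp add: power2_eq_square algebra_simps)
      finally show ?thesis by simp
    qed
    ultimately have "(1 - u) *\<^sub>R c + u *\<^sub>R d = 0" by simp
    then have "0 \<in> closed_segment c d" unfolding closed_segment_def using u01 by (intro CollectI exI[of _ u]) simp
    with n0 show False by simp
  qed
  show ?thesis using part1 part2 by blast
qed

end
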